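(* Let $X\subseteq \mathbb{P}^1\times\mathbb{P}^1\times\mathbb{P}^1$ be a variety of lines such that, for each $h=1,2,3$, $U_h(X)$ resembles a Ferrers diagram. Then $X$ has the $Hyp_5(\star)$-property if and only if for all $a_1,a_2\in[d_1]$, $b_1,b_2\in[d_2]$, $c_1,c_2\in[d_3]$ the following three conditions hold: (1) either $\left(\begin{array}{cc}\mu_{a_1b_1c_1} & \mu_{a_1b_2c_1}\\ \mu_{a_2b_1c_1} & \mu_{a_2b_2c_1}\end{array}\right)\neq\left(\begin{array}{cc}2&1\\2&2\end{array}\right)$ or $\left(\begin{array}{cc}\mu_{a_1b_10} & \mu_{a_1b_20}\\ \mu_{a_2b_10} & \mu_{a_2b_20}\end{array}\right)\neq\left(\begin{array}{cc}1&1\\0&1\end{array}\right)$; (2) either $\left(\begin{array}{cc}\mu_{a_1b_1c_1} & \mu_{a_1b_1c_2}\\ \mu_{a_2b_1c_1} & \mu_{a_2b_1c_2}\end{array}\right)\neq\left(\begin{array}{cc}2&1\\2&2\end{array}\right)$ or $\left(\begin{array}{cc}\mu_{a_10c_1} & \mu_{a_10c_2}\\ \mu_{a_20c_1} & \mu_{a_20c_2}\end{array}\right)\neq\left(\begin{array}{cc}1&1\\0&1\end{array}\right)$; (3) either $\left(\begin{array}{cc}\mu_{a_1b_1c_1} & \mu_{a_1b_1c_2}\\ \mu_{a_1b_2c_1} & \mu_{a_1b_2c_2}\end{array}\right)\neq\left(\begin{array}{cc}2&1\\2&2\end{array}\right)$ or $\left(\begin{array}{cc}\mu_{0b_1c_1}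 & \mu_{0b_1c_2}\\ \mu_{0b_2c_1} & \mu_{0b_2c_2}\end{array}\right)\neq\left(\begin{array}{cc}1&1\\0&1\end{array}\right)$.
   Context: $R=K[x_{1,0},x_{1,1},x_{2,0},x_{2,1},x_{3,0},x_{3,1}]$ ($K$ algebraically closed, characteristic zero) trigraded by $\deg x_{i,j}=\mathbf e_i$, coordinate ring of $\mathbb{P}^1\times\mathbb{P}^1\times\mathbb{P}^1$. A variety of lines is written $X= \bigcup_{(i,j)\in U_3(X)} \mathcal{L}(A_i,B_j)\cup\bigcup_{(i,k)\in U_2(X)} \mathcal{L}(A_i,C_k)\cup \bigcup_{(j,k)\in U_1(X)} \mathcal{L}(B_j,C_k)$, where $\mathcal L(A_1),\ldots,\mathcal L(A_{d_1})$, $\mathcal L(B_1),\ldots,\mathcal L(B_{d_2})$, $\mathcal L(C_1),\ldots,\mathcal L(C_{d_3})$ are the distinct hyperplanes containing some line of $X$, defined by linear forms of degrees $(1,0,0),(0,1,0),(0,0,1)$ respectively, $\mathcal L(F,G)$ is the line defined by $(F,G)$, $U_3(X)\subseteq[d_1]\times[d_2]$, $U_2(X)\subseteq[d_1]\times[d_3]$, $U_1(X)\subseteq[d_2]\times[d_3]$, $[n]=\{1,\dots,n\}$. $U_h(X)$ resembles a Ferrers diagram if after permuting each of its two index sets it becomes a set $U$ with: $(u,v)\in U\Rightarrow (u',v')\in U$ for all $1\le u'\le u$, $1\le v'\le v$. For $P_{ijk}=\mathcal L(A_i)\cap\mathcal L(B_j)\cap\mathcal L(C_k)$, $\mu_{ijk}$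 is the number of lines of $X$ through $P_{ijk}$. Moreover $\mu_{ij0}=1$ if $\mathcal L(A_i,B_j)\in X$ and $0$ otherwise; $\mu_{i0k}=1$ if $\mathcal L(A_i,C_k)\in X$ and $0$ otherwise; $\mu_{0jk}=1$ if $\mathcal L(B_j,C_k)\in X$ and $0$ otherwise. $X$ has the $Hyp_5(\star)$-property if for any $5$ hyperplanes $H_1,\ldots,H_5$ (each defined by a linear form of degree some $\mathbf e_i$) such that $\mathcal{L}(H_i,H_j)$ is a line of $X$ for all $j\neq i-1,i,i+1$ (indices modulo $5$), there is $u$ with $\mathcal{L}(H_u,H_{u+1})$ a line of $X$. *)

theory Defs
  imports "HOL-Computational_Algebra.Polynomial"
begin

text \<open>Points of the projective line P^1 over K are modelled as K option
  (Some a = [a:1], None = the point at infinity [1:0]).  A hyperplane defined by a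
  linear form of degree e_t (t in {1,2,3}) is, up to scalar, determined by
  t and the unique point of the t-th factor P^1 where the form vanishes; we
  represent it by the pair (t, p).\<close>

type_synonym 'k pt3 = "'k option \<times> 'k option \<times> 'k option"
type_synonym 'k hyperplane = "nat \<times> 'k option"

definition coord :: "nat \<Rightarrow> 'k pt3 \<Rightarrow> 'k option" where
  "coord t x = (if t = 1 then fst x else if t = 2 then fst (snd x) else snd (snd x))"

definition is_hyperplane :: "'k hyperplane \<Rightarrow> bool" where
  "is_hyperplane H \<longleftrightarrow> fst H \<in> {1,2,3}"

definition hyp :: "'k hyperplane \<Rightarrow> 'k pt3 set" where
  "hyp H = {x. coord (fst H) x = snd H}"

definition Lin :: "'k hyperplane \<Rightarrow> 'k hyperplane \<Rightarrow> 'k pt3 set" where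
  "Lin F G = hyp F \<inter> hyp G"

definition lines_of ::
  "(nat \<Rightarrow> 'k option) \<Rightarrow> (nat \<Rightarrow> 'k option) \<Rightarrow> (nat \<Rightarrow> 'k option)
   \<Rightarrow> (nat \<times> nat) set \<Rightarrow> (nat \<times> nat) set \<Rightarrow> (nat \<times> nat) set \<Rightarrow> 'k pt3 set set" where
  "lines_of A B C U3 U2 U1 =
     {Lin (1, A i) (2, B j) | i j. (i, j) \<in> U3} \<union>
     {Lin (1, A i) (3, C k) | i k. (i, k) \<in> U2} \<union>
     {Lin (2, B j) (3, C k) | j k. (j, k) \<in> U1}"

definition line_in :: "'k pt3 set set \<Rightarrow> 'k hyperplane \<Rightarrow> 'k hyperplane \<Rightarrow> bool" where
  "line_in X F G \<longleftrightarrow> fst F \<noteq> fst G \<and> Lin F G \<in> X"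

definition Hyp5_star :: "'k pt3 set set \<Rightarrow> bool" where
  "Hyp5_star X \<longleftrightarrow>
     (\<forall>H :: nat \<Rightarrow> 'k hyperplane.
        (\<forall>i<5. is_hyperplane (H i)) \<and>
        (\<forall>i<5. \<forall>j<5. j \<noteq> (i + 4) mod 5 \<and> j \<noteq> i \<and> j \<noteq> (i + 1) mod 5
              \<longrightarrow> line_in X (H i) (H j))
        \<longrightarrow> (\<exists>u<5. line_in X (H u) (H ((u + 1) mod 5))))"

definition resembles_ferrers :: "(nat \<times> nat) set \<Rightarrow> nat \<Rightarrow> nat \<Rightarrow> bool" where
  "resembles_ferrers U m n \<longleftrightarrow>
     (\<exists>\<sigma> \<tau>. bij_betw \<sigma> {1..m} {1..m} \<and> bij_betw \<tau> {1..n} {1..n} \<and>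
        (let V = (\<lambda>(u, v). (\<sigma> u, \<tau> v)) ` U in
          \<forall>u v u' v'. (u, v) \<in> V \<and> 1 \<le> u' \<and> u' \<le> u \<and> 1 \<le> v' \<and> v' \<le> v \<longrightarrow> (u', v') \<in> V))"

definition mu :: "'k pt3 set set \<Rightarrow> (nat \<Rightarrow> 'k option) \<Rightarrow> (nat \<Rightarrow> 'k option) \<Rightarrow> (nat \<Rightarrow> 'k option)
   \<Rightarrow> nat \<Rightarrow> nat \<Rightarrow> nat \<Rightarrow> nat" where
  "mu X A B C i j k = card {L \<in> X. (A i, B j, C k) \<in> L}"

definition mu_AB :: "'k pt3 set set \<Rightarrow> (nat \<Rightarrow> 'k option) \<Rightarrow> (nat \<Rightarrow> 'k option) \<Rightarrow> nat \<Rightarrow> nat \<Rightarrow> nat" where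
  "mu_AB X A B i j = (if Lin (1, A i) (2, B j) \<in> X then 1 else 0)"

definition mu_AC :: "'k pt3 set set \<Rightarrow> (nat \<Rightarrow> 'k option) \<Rightarrow> (nat \<Rightarrow> 'k option) \<Rightarrow> nat \<Rightarrow> nat \<Rightarrow> nat" where
  "mu_AC X A C i k = (if Lin (1, A i) (3, C k) \<in> X then 1 else 0)"

definition mu_BC :: "'k pt3 set set \<Rightarrow> (nat \<Rightarrow> 'k option) \<Rightarrow> (nat \<Rightarrow> 'k option) \<Rightarrow> nat \<Rightarrow> nat \<Rightarrow> nat" where
  "mu_BC X B C j k = (if Lin (2, B j) (3, C k) \<in> X then 1 else 0)"

end

theory Submission
  imports Defs
begin


lemma all5: "(\<forall>i<(5::nat). P i) \<longleftrightarrow> P 0 \<and> P 1 \<and> P 2 \<and> P 3 \<and> P 4"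
  by (auto simp: less_Suc_eq eval_nat_numeral)
lemma ex5: "(\<exists>i<(5::nat). P i) \<longleftrightarrow> P 0 \<or> P 1 \<or> P 2 \<or> P 3 \<or> P 4"
  by (auto simp: less_Suc_eq eval_nat_numeral)

lemma Lin_comm: "Lin F G = Lin G F" by (auto simp: Lin_def)
lemma Lin_12: "Lin (Suc 0,p) (2,q) = {x. fst x = p \<and> fst (snd x) = q}"
  by (auto simp: Lin_def hyp_def coord_def)
lemma Lin_13: "Lin (Suc 0,p) (3,q) = {x. fst x = p \<and> snd (snd x) = q}"
  by (auto simp: Lin_def hyp_def coord_def)
lemma Lin_23: "Lin (2,p) (3,q) = {x. fst (snd x) = p \<and> snd (snd x) = q}"
  by (auto simp: Lin_def hyp_def coord_def)

lemma ne_12_13: "Lin (Suc 0,p) (2,q) \<noteq> Lin (Suc 0,p') (3,r)"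
proof
  assume e: "Lin (Suc 0,p) (2,q) = Lin (Suc 0,p') (3,r)"
  have "(p,q,None) \<in> Lin (Suc 0,p) (2,q)" "(p,q,Some undefined) \<in> Lin (Suc 0,p) (2,q)" by (simp_all add: Lin_def hyp_def coord_def)
  then show False unfolding e by (simp add: Lin_def hyp_def coord_def)
qed
lemma ne_12_23: "Lin (Suc 0,p) (2,q) \<noteq> Lin (2,p') (3,r)"
proof
  assume e: "Lin (Suc 0,p) (2,q) = Lin (2,p') (3,r)"
  have "(p,q,None) \<in> Lin (Suc 0,p) (2,q)" "(p,q,Some undefined) \<in> Lin (Suc 0,p) (2,q)" by (simp_all add: Lin_def hyp_def coord_def)
  then show False unfolding e by (simp add: Lin_def hyp_def coord_def)
qed
lemma ne_13_23: "Lin (Suc 0,p) (3,q) \<noteq> Lin (2,p') (3,r)"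
proof
  assume e: "Lin (Suc 0,p) (3,q) = Lin (2,p') (3,r)"
  have "(p,None,q) \<in> Lin (Suc 0,p) (3,q)" "(p,Some undefined,q) \<in> Lin (Suc 0,p) (3,q)" by (simp_all add: Lin_def hyp_def coord_def)
  then show False unfolding e by (simp add: Lin_def hyp_def coord_def)
qed
lemma eq_12: "Lin (Suc 0,p) (2,q) = Lin (Suc 0,p') (2,q') \<longleftrightarrow> p = p' \<and> q = q'"
proof
  assume e: "Lin (Suc 0,p) (2,q) = Lin (Suc 0,p') (2,q')"
  have "(p,q,None) \<in> Lin (Suc 0,p) (2,q)" by (simp add: Lin_def hyp_def coord_def)
  then show "p = p' \<and> q = q'" unfolding e by (simp add: Lin_def hyp_def coord_def)
qed auto
lemma eq_13: "Lin (Suc 0,p) (3,q) = Lin (Suc 0,p') (3,q') \<longleftrightarrow> p = p' \<and> q = q'"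
proof
  assume e: "Lin (Suc 0,p) (3,q) = Lin (Suc 0,p') (3,q')"
  have "(p,None,q) \<in> Lin (Suc 0,p) (3,q)" by (simp add: Lin_def hyp_def coord_def)
  then show "p = p' \<and> q = q'" unfolding e by (simp add: Lin_def hyp_def coord_def)
qed auto
lemma eq_23: "Lin (2,p) (3,q) = Lin (2,p') (3,q') \<longleftrightarrow> p = p' \<and> q = q'"
proof
  assume e: "Lin (2,p) (3,q) = Lin (2,p') (3,q')"
  have "(None,p,q) \<in> Lin (2,p) (3,q)" by (simp add: Lin_def hyp_def coord_def)
  then show "p = p' \<and> q = q'" unfolding e by (simp add: Lin_def hyp_def coord_def)
qed auto

lemmas ne_lin = ne_12_13 ne_12_23 ne_13_23 ne_12_13[symmetric] ne_12_23[symmetric] ne_13_23[symmetric]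


definition C5 :: "'k pt3 set set \<Rightarrow> 'k hyperplane \<Rightarrow> 'k hyperplane \<Rightarrow> 'k hyperplane \<Rightarrow> 'k hyperplane \<Rightarrow> 'k hyperplane \<Rightarrow> bool" where
  "C5 X v0 v1 v2 v3 v4 \<longleftrightarrow> line_in X v0 v1 \<and> line_in X v1 v2 \<and> line_in X v2 v3 \<and> line_in X v3 v4 \<and> line_in X v4 v0
     \<and> \<not> line_in X v0 v2 \<and> \<not> line_in X v1 v3 \<and> \<not> line_in X v2 v4 \<and> \<not> line_in X v3 v0 \<and> \<not> line_in X v4 v1"

lemma line_in_sym: "line_in X F G = line_in X G F"
  unfolding line_in_def by (auto simp: Lin_comm)
lemma line_in_fst: "line_in X F G \<Longrightarrow> fst F \<noteq> fst G"
  unfolding line_in_def by auto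

lemma C5_rot: "C5 X v0 v1 v2 v3 v4 \<Longrightarrow> C5 X v1 v2 v3 v4 v0"
  unfolding C5_def by blast
lemma C5_refl: "C5 X v0 v1 v2 v3 v4 \<Longrightarrow> C5 X v0 v4 v3 v2 v1"
  unfolding C5_def using line_in_sym[of X v0 v4] line_in_sym[of X v4 v3] line_in_sym[of X v3 v2] line_in_sym[of X v2 v1] line_in_sym[of X v1 v0] line_in_sym[of X v0 v3] line_in_sym[of X v4 v2] line_in_sym[of X v3 v1] line_in_sym[of X v2 v0] line_in_sym[of X v1 v4] by blast

lemma types5:
  fixes t0 t1 t2 t3 t4 :: nat
  assumes "t0 \<in> {1,2,3}" "t1 \<in> {1,2,3}" "t2 \<in> {1,2,3}" "t3 \<in> {1,2,3}" "t4 \<in> {1,2,3}"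
    "t0 \<noteq> t1" "t1 \<noteq> t2" "t2 \<noteq> t3" "t3 \<noteq> t4" "t4 \<noteq> t0"
  shows "(t1 = t3 \<and> t2 = t4) \<or> (t2 = t4 \<and> t3 = t0) \<or> (t3 = t0 \<and> t4 = t1) \<or> (t4 = t1 \<and> t0 = t2) \<or> (t0 = t2 \<and> t1 = t3)"
  using assms by auto

lemma C5_rotnorm:
  assumes c: "C5 X v0 v1 v2 v3 v4" and h: "is_hyperplane v0" "is_hyperplane v1" "is_hyperplane v2" "is_hyperplane v3" "is_hyperplane v4"
  shows "\<exists>w0 w1 w2 w3 w4. C5 X w0 w1 w2 w3 w4 \<and> is_hyperplane w0 \<and> is_hyperplane w1 \<and> is_hyperplane w2 \<and> is_hyperplane w3 \<and> is_hyperplane w4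
     \<and> fst w1 = fst w3 \<and> fst w2 = fst w4"
proof -
  have d: "fst v0 \<noteq> fst v1" "fst v1 \<noteq> fst v2" "fst v2 \<noteq> fst v3" "fst v3 \<noteq> fst v4" "fst v4 \<noteq> fst v0"
    using c unfolding C5_def by (auto dest: line_in_fst)
  have c1: "C5 X v1 v2 v3 v4 v0" using C5_rot[OF c] .
  have c2: "C5 X v2 v3 v4 v0 v1" using C5_rot[OF c1] .
  have c3: "C5 X v3 v4 v0 v1 v2" using C5_rot[OF c2] .
  have c4: "C5 X v4 v0 v1 v2 v3" using C5_rot[OF c3] .
  from types5[of "fst v0" "fst v1" "fst v2" "fst v3" "fst v4"] h[unfolded is_hyperplane_def] d
  have "(fst v1 = fst v3 \<and> fst v2 = fst v4) \<or> (fst v2 = fst v4 \<and> fst v3 = fst v0) \<or> (fst v3 = fst v0 \<and> fst v4 = fst v1) \<or> (fst v4 = fst v1 \<and> fst v0 = fst v2) \<or> (fst v0 = fst v2 \<and> fst v1 = fst v3)"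
    by blast
  then show ?thesis
  proof (elim disjE)
    assume a: "fst v1 = fst v3 \<and> fst v2 = fst v4" show ?thesis apply (rule exI[of _ v0], rule exI[of _ v1], rule exI[of _ v2], rule exI[of _ v3], rule exI[of _ v4]) using c h a by simp
  next
    assume a: "fst v2 = fst v4 \<and> fst v3 = fst v0" show ?thesis apply (rule exI[of _ v1], rule exI[of _ v2], rule exI[of _ v3], rule exI[of _ v4], rule exI[of _ v0]) using c1 h a by simp
  next
    assume a: "fst v3 = fst v0 \<and> fst v4 = fst v1" show ?thesis apply (rule exI[of _ v2], rule exI[of _ v3], rule exI[of _ v4], rule exI[of _ v0], rule exI[of _ v1]) using c2 h a by simp
  next
    assume a: "fst v4 = fst v1 \<and> fst v0 = fst v2" show ?thesis apply (rule exI[of _ v3], rule exI[of _ v4], rule exI[of _ v0], rule exI[of _ v1], rule exI[of _ v2]) using c3 h a by simp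
  next
    assume a: "fst v0 = fst v2 \<and> fst v1 = fst v3" show ?thesis apply (rule exI[of _ v4], rule exI[of _ v0], rule exI[of _ v1], rule exI[of _ v2], rule exI[of _ v3]) using c4 h a by simp
  qed
qed

lemma C5_norm:
  assumes c: "C5 X v0 v1 v2 v3 v4" and h: "is_hyperplane v0" "is_hyperplane v1" "is_hyperplane v2" "is_hyperplane v3" "is_hyperplane v4"
  shows "\<exists>w0 w1 w2 w3 w4. C5 X w0 w1 w2 w3 w4 \<and> fst w0 \<in> {1,2,3} \<and> fst w1 \<in> {1,2,3} \<and> fst w2 \<in> {1,2,3}
     \<and> fst w1 = fst w3 \<and> fst w2 = fst w4 \<and> fst w1 < fst w2 \<and> fst w0 \<noteq> fst w1 \<and> fst w0 \<noteq> fst w2"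
proof -
  obtain w0 w1 w2 w3 w4 where w: "C5 X w0 w1 w2 w3 w4" "is_hyperplane w0" "is_hyperplane w1" "is_hyperplane w2" "is_hyperplane w3" "is_hyperplane w4"
     "fst w1 = fst w3" "fst w2 = fst w4"
    using C5_rotnorm[OF c h] by blast
  have d: "fst w0 \<noteq> fst w1" "fst w1 \<noteq> fst w2" "fst w4 \<noteq> fst w0"
    using w(1) unfolding C5_def by (auto dest: line_in_fst)
  show ?thesis
  proof (cases "fst w1 < fst w2")
    case True show ?thesis apply (rule exI[of _ w0], rule exI[of _ w1], rule exI[of _ w2], rule exI[of _ w3], rule exI[of _ w4]) using w d True by (simp add: is_hyperplane_def)
  next
    case False
    then have "fst w4 < fst w3" using d w by auto
    moreover have "C5 X w0 w4 w3 w2 w1" using C5_refl[OF w(1)] .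
    ultimately have r: "fst w4 < fst w3" "C5 X w0 w4 w3 w2 w1" by auto
    show ?thesis apply (rule exI[of _ w0], rule exI[of _ w4], rule exI[of _ w3], rule exI[of _ w2], rule exI[of _ w1]) using w d r by (simp add: is_hyperplane_def)
  qed
qed

lemma notHyp5_C5:
  assumes "\<not> Hyp5_star X"
  shows "\<exists>v0 v1 v2 v3 v4. C5 X v0 v1 v2 v3 v4 \<and> is_hyperplane v0 \<and> is_hyperplane v1 \<and> is_hyperplane v2 \<and> is_hyperplane v3 \<and> is_hyperplane v4"
proof -
  obtain H :: "nat \<Rightarrow> 'a hyperplane" where hH: "\<not> ((\<forall>i<5. is_hyperplane (H i)) \<and>
        (\<forall>i<5. \<forall>j<5. j \<noteq> (i + 4) mod 5 \<and> j \<noteq> i \<and> j \<noteq> (i + 1) mod 5 \<longrightarrow> line_in X (H i) (H j))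
        \<longrightarrow> (\<exists>u<5. line_in X (H u) (H ((u + 1) mod 5))))"
    using assms unfolding Hyp5_star_def not_all ..
  have hH': "((\<forall>i<5. is_hyperplane (H i)) \<and>
        (\<forall>i<5. \<forall>j<5. j \<noteq> (i + 4) mod 5 \<and> j \<noteq> i \<and> j \<noteq> (i + 1) mod 5 \<longrightarrow> line_in X (H i) (H j)))
        \<and> \<not> (\<exists>u<5. line_in X (H u) (H ((u + 1) mod 5)))"
    using not_imp[THEN iffD1, OF hH] .
  note h = conjunct1[OF conjunct1[OF hH']]
  note p = conjunct2[OF conjunct1[OF hH']]
  note n = conjunct2[OF hH']
  have p': "line_in X (H 0) (H 2)" "line_in X (H 2) (H 4)" "line_in X (H 4) (H 1)" "line_in X (H 1) (H 3)" "line_in X (H 3) (H 0)"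
    using p[rule_format, of 0 2] p[rule_format, of 2 4] p[rule_format, of 4 1] p[rule_format, of 1 3] p[rule_format, of 3 0] by simp_all
  have n2: "\<And>u. u < 5 \<Longrightarrow> \<not> line_in X (H u) (H ((u + 1) mod 5))" using n by blast
  have n': "\<not> line_in X (H 0) (H 1)" "\<not> line_in X (H 1) (H 2)" "\<not> line_in X (H 2) (H 3)" "\<not> line_in X (H 3) (H 4)" "\<not> line_in X (H 4) (H 0)"
    using n2[of 0] n2[of 1] n2[of 2] n2[of 3] n2[of 4] by (simp_all add: numeral_2_eq_2)
  have "C5 X (H 0) (H 2) (H 4) (H 1) (H 3)"
    unfolding C5_def using p' n' line_in_sym[of X "H 0" "H 4"] line_in_sym[of X "H 2" "H 1"] line_in_sym[of X "H 4" "H 3"] line_in_sym[of X "H 1" "H 0"] line_in_sym[of X "H 3" "H 2"] by blast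
  moreover have "is_hyperplane (H 0) \<and> is_hyperplane (H 2) \<and> is_hyperplane (H 4) \<and> is_hyperplane (H 1) \<and> is_hyperplane (H 3)"
    using h by (simp add: all5)
  ultimately show ?thesis by blast
qed

lemma C5_notHyp5:
  assumes c: "C5 X v0 v1 v2 v3 v4" and h: "is_hyperplane v0" "is_hyperplane v1" "is_hyperplane v2" "is_hyperplane v3" "is_hyperplane v4"
  shows "\<not> Hyp5_star X"
proof -
  define H where "H = (\<lambda>i::nat. if i = 0 then v0 else if i = 1 then v3 else if i = 2 then v1 else if i = 3 then v4 else v2)"
  have e: "line_in X v0 v1" "line_in X v1 v2" "line_in X v2 v3" "line_in X v3 v4" "line_in X v4 v0"
    "line_in X v1 v0" "line_in X v2 v1" "line_in X v3 v2" "line_in X v4 v3" "line_in X v0 v4"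
    using c unfolding C5_def using line_in_sym[of X v1 v0] line_in_sym[of X v2 v1] line_in_sym[of X v3 v2] line_in_sym[of X v4 v3] line_in_sym[of X v0 v4] by blast+
  have ne: "\<not> line_in X v0 v2" "\<not> line_in X v1 v3" "\<not> line_in X v2 v4" "\<not> line_in X v3 v0" "\<not> line_in X v4 v1"
    "\<not> line_in X v2 v0" "\<not> line_in X v3 v1" "\<not> line_in X v4 v2" "\<not> line_in X v0 v3" "\<not> line_in X v1 v4"
    using c unfolding C5_def using line_in_sym[of X v2 v0] line_in_sym[of X v3 v1] line_in_sym[of X v4 v2] line_in_sym[of X v0 v3] line_in_sym[of X v1 v4] by blast+
  have "(\<forall>i<5. is_hyperplane (H i)) \<and>
        (\<forall>i<5. \<forall>j<5. j \<noteq> (i + 4) mod 5 \<and> j \<noteq> i \<and> j \<noteq> (i + 1) mod 5 \<longrightarrow> line_in X (H i) (H j))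
        \<and> \<not> (\<exists>u<5. line_in X (H u) (H ((u + 1) mod 5)))"
    unfolding all5 ex5 H_def using h e ne by simp
  then show ?thesis unfolding Hyp5_star_def by blast
qed

locale LX =
  fixes A B C :: "nat \<Rightarrow> 'k option" and d1 d2 d3 :: nat
    and U3 U2 U1 :: "(nat \<times> nat) set" and X :: "'k pt3 set set"
  assumes X_def: "X = lines_of A B C U3 U2 U1"
    and injA: "inj_on A {1..d1}" and injB: "inj_on B {1..d2}" and injC: "inj_on C {1..d3}"
    and U3_sub: "U3 \<subseteq> {1..d1} \<times> {1..d2}"
    and U2_sub: "U2 \<subseteq> {1..d1} \<times> {1..d3}"
    and U1_sub: "U1 \<subseteq> {1..d2} \<times> {1..d3}"
begin

lemma inX_12: "Lin (Suc 0,p) (2,q) \<in> X \<longleftrightarrow> (\<exists>i j. (i,j)\<in>U3 \<and> p = A i \<and> q = B j)"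
  unfolding X_def lines_of_def by (auto simp: ne_lin eq_12)
lemma inX_13: "Lin (Suc 0,p) (3,q) \<in> X \<longleftrightarrow> (\<exists>i j. (i,j)\<in>U2 \<and> p = A i \<and> q = C j)"
  unfolding X_def lines_of_def by (auto simp: ne_lin eq_13)
lemma inX_23: "Lin (2,p) (3,q) \<in> X \<longleftrightarrow> (\<exists>i j. (i,j)\<in>U1 \<and> p = B i \<and> q = C j)"
  unfolding X_def lines_of_def by (auto simp: ne_lin eq_23)

lemma E12:
  assumes a: "a \<in> {1..d1}" and b: "b \<in> {1..d2}"
  shows "Lin (Suc 0, A a) (2, B b) \<in> X \<longleftrightarrow> (a,b) \<in> U3"
  unfolding inX_12
proof
  assume "\<exists>i j. (i,j)\<in>U3 \<and> A a = A i \<and> B b = B j"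
  then obtain i j where ij: "(i,j)\<in>U3" "A a = A i" "B b = B j" by blast
  have "i \<in> {1..d1}" "j \<in> {1..d2}" using ij(1) U3_sub by auto
  then have "a = i" "b = j" using inj_onD[OF injA ij(2)] inj_onD[OF injB ij(3)] a b by auto
  then show "(a,b)\<in>U3" using ij by simp
qed auto

lemma E13:
  assumes a: "a \<in> {1..d1}" and b: "b \<in> {1..d3}"
  shows "Lin (Suc 0, A a) (3, C b) \<in> X \<longleftrightarrow> (a,b) \<in> U2"
  unfolding inX_13
proof
  assume "\<exists>i j. (i,j)\<in>U2 \<and> A a = A i \<and> C b = C j"
  then obtain i j where ij: "(i,j)\<in>U2" "A a = A i" "C b = C j" by blast
  have "i \<in> {1..d1}" "j \<in> {1..d3}" using ij(1) U2_sub by auto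
  then have "a = i" "b = j" using inj_onD[OF injA ij(2)] inj_onD[OF injC ij(3)] a b by auto
  then show "(a,b)\<in>U2" using ij by simp
qed auto

lemma E23:
  assumes a: "a \<in> {1..d2}" and b: "b \<in> {1..d3}"
  shows "Lin (2, B a) (3, C b) \<in> X \<longleftrightarrow> (a,b) \<in> U1"
  unfolding inX_23
proof
  assume "\<exists>i j. (i,j)\<in>U1 \<and> B a = B i \<and> C b = C j"
  then obtain i j where ij: "(i,j)\<in>U1" "B a = B i" "C b = C j" by blast
  have "i \<in> {1..d2}" "j \<in> {1..d3}" using ij(1) U1_sub by auto
  then have "a = i" "b = j" using inj_onD[OF injB ij(2)] inj_onD[OF injC ij(3)] a b by auto
  then show "(a,b)\<in>U1" using ij by simp
qed auto

lemma mu_eq: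
  assumes i: "i \<in> {1..d1}" and j: "j \<in> {1..d2}" and k: "k \<in> {1..d3}"
  shows "mu X A B C i j k = (if (i,j)\<in>U3 then 1 else 0) + (if (i,k)\<in>U2 then 1 else 0) + (if (j,k)\<in>U1 then 1 else 0)"
proof -
  let ?P = "(A i, B j, C k)"
  have S: "{L \<in> X. ?P \<in> L} = {L \<in> {Lin (Suc 0, A i) (2, B j) | i j. (i, j) \<in> U3}. ?P \<in> L}
     \<union> {L \<in> {Lin (Suc 0, A i) (3, C k) | i k. (i, k) \<in> U2}. ?P \<in> L}
     \<union> {L \<in> {Lin (2, B j) (3, C k) | j k. (j, k) \<in> U1}. ?P \<in> L}"
    unfolding X_def lines_of_def by auto
  have 1: "{L \<in> {Lin (Suc 0, A i) (2, B j) | i j. (i, j) \<in> U3}. ?P \<in> L} =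
     (if (i,j)\<in>U3 then {Lin (Suc 0,A i) (2,B j)} else {})"
  proof -
    have "?P \<in> Lin (Suc 0, A i') (2, B j') \<and> (i',j') \<in> U3 \<longleftrightarrow> i' = i \<and> j' = j \<and> (i,j) \<in> U3" for i' j'
    proof
      assume h: "?P \<in> Lin (Suc 0, A i') (2, B j') \<and> (i',j') \<in> U3"
      then have "i' \<in> {1..d1}" "j' \<in> {1..d2}" using U3_sub by auto
      moreover have "A i = A i'" "B j = B j'" using h by (simp_all add: Lin_12)
      ultimately show "i' = i \<and> j' = j \<and> (i,j) \<in> U3" using inj_onD[OF injA] inj_onD[OF injB] i j h by metis
    qed (auto simp: Lin_12)
    note eq = this
    have "{L \<in> {Lin (Suc 0, A i) (2, B j) | i j. (i,j) \<in> U3}. ?P \<in> L} = {Lin (Suc 0, A i') (2, B j') | i' j'. ?P \<in> Lin (Suc 0, A i') (2, B j') \<and> (i',j') \<in> U3}" by blast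
    also have "\<dots> = {Lin (Suc 0, A i') (2, B j') | i' j'. i' = i \<and> j' = j \<and> (i,j) \<in> U3}" by (simp only: eq)
    also have "\<dots> = (if (i,j)\<in>U3 then {Lin (Suc 0, A i) (2, B j)} else {})" by auto
    finally show ?thesis .
  qed
  have 2: "{L \<in> {Lin (Suc 0, A i) (3, C k) | i k. (i, k) \<in> U2}. ?P \<in> L} =
     (if (i,k)\<in>U2 then {Lin (Suc 0,A i) (3,C k)} else {})"
  proof -
    have "?P \<in> Lin (Suc 0, A i') (3, C k') \<and> (i',k') \<in> U2 \<longleftrightarrow> i' = i \<and> k' = k \<and> (i,k) \<in> U2" for i' k'
    proof
      assume h: "?P \<in> Lin (Suc 0, A i') (3, C k') \<and> (i',k') \<in> U2"
      then have "i' \<in> {1..d1}" "k' \<in> {1..d3}" using U2_sub by auto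
      moreover have "A i = A i'" "C k = C k'" using h by (simp_all add: Lin_13)
      ultimately show "i' = i \<and> k' = k \<and> (i,k) \<in> U2" using inj_onD[OF injA] inj_onD[OF injC] i k h by metis
    qed (auto simp: Lin_13)
    note eq = this
    have "{L \<in> {Lin (Suc 0, A i) (3, C k) | i k. (i,k) \<in> U2}. ?P \<in> L} = {Lin (Suc 0, A i') (3, C k') | i' k'. ?P \<in> Lin (Suc 0, A i') (3, C k') \<and> (i',k') \<in> U2}" by blast
    also have "\<dots> = {Lin (Suc 0, A i') (3, C k') | i' k'. i' = i \<and> k' = k \<and> (i,k) \<in> U2}" by (simp only: eq)
    also have "\<dots> = (if (i,k)\<in>U2 then {Lin (Suc 0, A i) (3, C k)} else {})" by auto
    finally show ?thesis .
  qed
  have 3: "{L \<in> {Lin (2, B j) (3, C k) | j k. (j, k) \<in> U1}. ?P \<in> L} =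
     (if (j,k)\<in>U1 then {Lin (2,B j) (3,C k)} else {})"
  proof -
    have "?P \<in> Lin (2, B j') (3, C k') \<and> (j',k') \<in> U1 \<longleftrightarrow> j' = j \<and> k' = k \<and> (j,k) \<in> U1" for j' k'
    proof
      assume h: "?P \<in> Lin (2, B j') (3, C k') \<and> (j',k') \<in> U1"
      then have "j' \<in> {1..d2}" "k' \<in> {1..d3}" using U1_sub by auto
      moreover have "B j = B j'" "C k = C k'" using h by (simp_all add: Lin_23)
      ultimately show "j' = j \<and> k' = k \<and> (j,k) \<in> U1" using inj_onD[OF injB] inj_onD[OF injC] j k h by metis
    qed (auto simp: Lin_23)
    note eq = this
    have "{L \<in> {Lin (2, B j) (3, C k) | j k. (j,k) \<in> U1}. ?P \<in> L} = {Lin (2, B j') (3, C k') | j' k'. ?P \<in> Lin (2, B j') (3, C k') \<and> (j',k') \<in> U1}" by blast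
    also have "\<dots> = {Lin (2, B j') (3, C k') | j' k'. j' = j \<and> k' = k \<and> (j,k) \<in> U1}" by (simp only: eq)
    also have "\<dots> = (if (j,k)\<in>U1 then {Lin (2, B j) (3, C k)} else {})" by auto
    finally show ?thesis .
  qed
  show ?thesis unfolding mu_def S 1 2 3 by (simp add: ne_lin)
qed

lemma muAB_eq: "i \<in> {1..d1} \<Longrightarrow> j \<in> {1..d2} \<Longrightarrow> mu_AB X A B i j = (if (i,j)\<in>U3 then 1 else 0)"
  by (simp add: mu_AB_def E12)
lemma muAC_eq: "i \<in> {1..d1} \<Longrightarrow> j \<in> {1..d3} \<Longrightarrow> mu_AC X A C i j = (if (i,j)\<in>U2 then 1 else 0)"
  by (simp add: mu_AC_def E13)
lemma muBC_eq: "i \<in> {1..d2} \<Longrightarrow> j \<in> {1..d3} \<Longrightarrow> mu_BC X B C i j = (if (i,j)\<in>U1 then 1 else 0)"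
  by (simp add: mu_BC_def E23)


lemma LE12: "a \<in> {1..d1} \<Longrightarrow> b \<in> {1..d2} \<Longrightarrow> line_in X (Suc 0, A a) (2, B b) \<longleftrightarrow> (a,b) \<in> U3"
  unfolding line_in_def using E12 by simp
lemma LE21: "a \<in> {1..d1} \<Longrightarrow> b \<in> {1..d2} \<Longrightarrow> line_in X (2, B b) (Suc 0, A a) \<longleftrightarrow> (a,b) \<in> U3"
  using LE12 line_in_sym by metis
lemma LE13: "a \<in> {1..d1} \<Longrightarrow> b \<in> {1..d3} \<Longrightarrow> line_in X (Suc 0, A a) (3, C b) \<longleftrightarrow> (a,b) \<in> U2"
  unfolding line_in_def using E13 by simp
lemma LE31: "a \<in> {1..d1} \<Longrightarrow> b \<in> {1..d3} \<Longrightarrow> line_in X (3, C b) (Suc 0, A a) \<longleftrightarrow> (a,b) \<in> U2"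
  using LE13 line_in_sym by metis
lemma LE23: "a \<in> {1..d2} \<Longrightarrow> b \<in> {1..d3} \<Longrightarrow> line_in X (2, B a) (3, C b) \<longleftrightarrow> (a,b) \<in> U1"
  unfolding line_in_def using E23 by simp
lemma LE32: "a \<in> {1..d2} \<Longrightarrow> b \<in> {1..d3} \<Longrightarrow> line_in X (3, C b) (2, B a) \<longleftrightarrow> (a,b) \<in> U1"
  using LE23 line_in_sym by metis
lemma LEsame: "\<not> line_in X (t, p) (t, q)"
  unfolding line_in_def by simp

lemmas LE = LE12 LE21 LE13 LE31 LE23 LE32 LEsame

lemma X12: "line_in X (Suc 0, p) (2, q) \<Longrightarrow> \<exists>a b. a \<in> {1..d1} \<and> b \<in> {1..d2} \<and> p = A a \<and> q = B b"
  unfolding line_in_def inX_12 using U3_sub by blast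
lemma X13: "line_in X (Suc 0, p) (3, q) \<Longrightarrow> \<exists>a b. a \<in> {1..d1} \<and> b \<in> {1..d3} \<and> p = A a \<and> q = C b"
  unfolding line_in_def inX_13 using U2_sub by blast
lemma X23: "line_in X (2, p) (3, q) \<Longrightarrow> \<exists>a b. a \<in> {1..d2} \<and> b \<in> {1..d3} \<and> p = B a \<and> q = C b"
  unfolding line_in_def inX_23 using U1_sub by blast

definition pat3 where "pat3 a1 a2 b1 b2 c \<longleftrightarrow> (a1,b1)\<in>U3 \<and> (a1,b2)\<in>U3 \<and> (a2,b1)\<notin>U3 \<and> (a2,b2)\<in>U3
   \<and> (a1,c)\<notin>U2 \<and> (a2,c)\<in>U2 \<and> (b1,c)\<in>U1 \<and> (b2,c)\<notin>U1"
definition pat2 where "pat2 a1 a2 b c1 c2 \<longleftrightarrow> (a1,c1)\<in>U2 \<and> (a1,c2)\<in>U2 \<and> (a2,c1)\<notin>U2 \<and> (a2,c2)\<in>U2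
   \<and> (a1,b)\<notin>U3 \<and> (a2,b)\<in>U3 \<and> (b,c1)\<in>U1 \<and> (b,c2)\<notin>U1"
definition pat1 where "pat1 a b1 b2 c1 c2 \<longleftrightarrow> (b1,c1)\<in>U1 \<and> (b1,c2)\<in>U1 \<and> (b2,c1)\<notin>U1 \<and> (b2,c2)\<in>U1
   \<and> (a,b1)\<notin>U3 \<and> (a,b2)\<in>U3 \<and> (a,c1)\<in>U2 \<and> (a,c2)\<notin>U2"

definition bad where "bad \<longleftrightarrow>
  (\<exists>a1\<in>{1..d1}. \<exists>a2\<in>{1..d1}. \<exists>b1\<in>{1..d2}. \<exists>b2\<in>{1..d2}. \<exists>c\<in>{1..d3}. pat3 a1 a2 b1 b2 c) \<or>
  (\<exists>a1\<in>{1..d1}. \<exists>a2\<in>{1..d1}. \<exists>b\<in>{1..d2}. \<exists>c1\<in>{1..d3}. \<exists>c2\<in>{1..d3}. pat2 a1 a2 b c1 c2) \<or>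
  (\<exists>a\<in>{1..d1}. \<exists>b1\<in>{1..d2}. \<exists>b2\<in>{1..d2}. \<exists>c1\<in>{1..d3}. \<exists>c2\<in>{1..d3}. pat1 a b1 b2 c1 c2)"

lemma bad_notHyp5: "bad \<Longrightarrow> \<not> Hyp5_star X"
  unfolding bad_def
proof (elim disjE bexE)
  fix a1 a2 b1 b2 c assume r: "a1 \<in> {1..d1}" "a2 \<in> {1..d1}" "b1 \<in> {1..d2}" "b2 \<in> {1..d2}" "c \<in> {1..d3}"
    and p: "pat3 a1 a2 b1 b2 c"
  have "C5 X (3, C c) (Suc 0, A a2) (2, B b2) (Suc 0, A a1) (2, B b1)"
    using r p unfolding C5_def pat3_def by (simp add: LE)
  then show ?thesis by (rule C5_notHyp5) (simp_all add: is_hyperplane_def)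
next
  fix a1 a2 b c1 c2 assume r: "a1 \<in> {1..d1}" "a2 \<in> {1..d1}" "b \<in> {1..d2}" "c1 \<in> {1..d3}" "c2 \<in> {1..d3}"
    and p: "pat2 a1 a2 b c1 c2"
  have "C5 X (2, B b) (Suc 0, A a2) (3, C c2) (Suc 0, A a1) (3, C c1)"
    using r p unfolding C5_def pat2_def by (simp add: LE)
  then show ?thesis by (rule C5_notHyp5) (simp_all add: is_hyperplane_def)
next
  fix a b1 b2 c1 c2 assume r: "a \<in> {1..d1}" "b1 \<in> {1..d2}" "b2 \<in> {1..d2}" "c1 \<in> {1..d3}" "c2 \<in> {1..d3}"
    and p: "pat1 a b1 b2 c1 c2"
  have "C5 X (Suc 0, A a) (2, B b2) (3, C c2) (2, B b1) (3, C c1)"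
    using r p unfolding C5_def pat1_def by (simp add: LE)
  then show ?thesis by (rule C5_notHyp5) (simp_all add: is_hyperplane_def)
qed


lemma notHyp5_bad: "\<not> Hyp5_star X \<Longrightarrow> bad"
proof -
  assume "\<not> Hyp5_star X"
  then obtain v0 v1 v2 v3 v4 where "C5 X v0 v1 v2 v3 v4" "is_hyperplane v0" "is_hyperplane v1" "is_hyperplane v2" "is_hyperplane v3" "is_hyperplane v4"
    using notHyp5_C5 by blast
  then obtain w0 w1 w2 w3 w4 where c: "C5 X w0 w1 w2 w3 w4" and t: "fst w0 \<in> {1,2,3}" "fst w1 \<in> {1,2,3}" "fst w2 \<in> {1,2,3}"
     "fst w1 = fst w3" "fst w2 = fst w4" "fst w1 < fst w2" "fst w0 \<noteq> fst w1" "fst w0 \<noteq> fst w2"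
    using C5_norm by blast
  have e: "line_in X w1 w0" "line_in X w1 w2" "line_in X w3 w4"
    using c unfolding C5_def by (auto simp: line_in_sym[of X w1 w0])
  have "(fst w0 = 3 \<and> fst w1 = Suc 0 \<and> fst w2 = 2) \<or> (fst w0 = 2 \<and> fst w1 = Suc 0 \<and> fst w2 = 3) \<or> (fst w0 = Suc 0 \<and> fst w1 = 2 \<and> fst w2 = 3)"
    using t by auto
  then show bad
  proof (elim disjE conjE)
    assume t0: "fst w0 = 3" and t1: "fst w1 = Suc 0" and t2: "fst w2 = 2"
    obtain r0 p1 q2 p3 q4 where w: "w0 = (3, r0)" "w1 = (Suc 0, p1)" "w2 = (2, q2)" "w3 = (Suc 0, p3)" "w4 = (2, q4)"
      using t0 t1 t2 t(4,5) by (metis prod.collapse)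
    obtain a2 c where ac: "a2 \<in> {1..d1}" "c \<in> {1..d3}" "p1 = A a2" "r0 = C c" using X13 e(1) w by blast
    obtain a' b2 where ab: "b2 \<in> {1..d2}" "q2 = B b2" using X12 e(2) w by blast
    obtain a1 b1 where ab': "a1 \<in> {1..d1}" "b1 \<in> {1..d2}" "p3 = A a1" "q4 = B b1" using X12 e(3) w by blast
    have "C5 X (3, C c) (Suc 0, A a2) (2, B b2) (Suc 0, A a1) (2, B b1)"
      using c w ac ab ab' by simp
    then have "pat3 a1 a2 b1 b2 c"
      using ac ab ab' unfolding C5_def pat3_def by (simp add: LE)
    then show bad unfolding bad_def using ac ab ab' by blast
  next
    assume t0: "fst w0 = 2" and t1: "fst w1 = Suc 0" and t2: "fst w2 = 3"
    obtain r0 p1 q2 p3 q4 where w: "w0 = (2, r0)" "w1 = (Suc 0, p1)" "w2 = (3, q2)" "w3 = (Suc 0, p3)" "w4 = (3, q4)"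
      using t0 t1 t2 t(4,5) by (metis prod.collapse)
    obtain a2 b where ac: "a2 \<in> {1..d1}" "b \<in> {1..d2}" "p1 = A a2" "r0 = B b" using X12 e(1) w by blast
    obtain a' c2 where ab: "c2 \<in> {1..d3}" "q2 = C c2" using X13 e(2) w by blast
    obtain a1 c1 where ab': "a1 \<in> {1..d1}" "c1 \<in> {1..d3}" "p3 = A a1" "q4 = C c1" using X13 e(3) w by blast
    have "C5 X (2, B b) (Suc 0, A a2) (3, C c2) (Suc 0, A a1) (3, C c1)"
      using c w ac ab ab' by simp
    then have "pat2 a1 a2 b c1 c2"
      using ac ab ab' unfolding C5_def pat2_def by (simp add: LE)
    then show bad unfolding bad_def using ac ab ab' by blast
  next
    assume t0: "fst w0 = Suc 0" and t1: "fst w1 = 2" and t2: "fst w2 = 3"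
    obtain r0 p1 q2 p3 q4 where w: "w0 = (Suc 0, r0)" "w1 = (2, p1)" "w2 = (3, q2)" "w3 = (2, p3)" "w4 = (3, q4)"
      using t0 t1 t2 t(4,5) by (metis prod.collapse)
    have e1: "line_in X (Suc 0, r0) (2, p1)" using e(1) w line_in_sym by metis
    obtain a b2 where ac: "a \<in> {1..d1}" "b2 \<in> {1..d2}" "r0 = A a" "p1 = B b2" using X12 e1 by blast
    obtain b' c2 where ab: "c2 \<in> {1..d3}" "q2 = C c2" using X23 e(2) w by blast
    obtain b1 c1 where ab': "b1 \<in> {1..d2}" "c1 \<in> {1..d3}" "p3 = B b1" "q4 = C c1" using X23 e(3) w by blast
    have "C5 X (Suc 0, A a) (2, B b2) (3, C c2) (2, B b1) (3, C c1)"
      using c w ac ab ab' by simp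
    then have "pat1 a b1 b2 c1 c2"
      using ac ab ab' unfolding C5_def pat1_def by (simp add: LE)
    then show bad unfolding bad_def using ac ab ab' by blast
  qed
qed


lemma cond1_iff:
  assumes "a1 \<in> {1..d1}" "a2 \<in> {1..d1}" "b1 \<in> {1..d2}" "b2 \<in> {1..d2}" "c1 \<in> {1..d3}"
  shows "(\<not> (mu X A B C a1 b1 c1 = 2 \<and> mu X A B C a1 b2 c1 = 1 \<and>
            mu X A B C a2 b1 c1 = 2 \<and> mu X A B C a2 b2 c1 = 2)
        \<or> \<not> (mu_AB X A B a1 b1 = 1 \<and> mu_AB X A B a1 b2 = 1 \<and>
             mu_AB X A B a2 b1 = 0 \<and> mu_AB X A B a2 b2 = 1)) \<longleftrightarrow> \<not> pat3 a1 a2 b1 b2 c1"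
  using assms by (simp add: mu_eq muAB_eq pat3_def)

lemma cond2_iff:
  assumes "a1 \<in> {1..d1}" "a2 \<in> {1..d1}" "b1 \<in> {1..d2}" "c1 \<in> {1..d3}" "c2 \<in> {1..d3}"
  shows "(\<not> (mu X A B C a1 b1 c1 = 2 \<and> mu X A B C a1 b1 c2 = 1 \<and>
            mu X A B C a2 b1 c1 = 2 \<and> mu X A B C a2 b1 c2 = 2)
        \<or> \<not> (mu_AC X A C a1 c1 = 1 \<and> mu_AC X A C a1 c2 = 1 \<and>
             mu_AC X A C a2 c1 = 0 \<and> mu_AC X A C a2 c2 = 1)) \<longleftrightarrow> \<not> pat2 a1 a2 b1 c1 c2"
  using assms by (simp add: mu_eq muAC_eq pat2_def)

lemma cond3_iff:
  assumes "a1 \<in> {1..d1}" "b1 \<in> {1..d2}" "b2 \<in> {1..d2}" "c1 \<in> {1..d3}" "c2 \<in> {1..d3}"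
  shows "(\<not> (mu X A B C a1 b1 c1 = 2 \<and> mu X A B C a1 b1 c2 = 1 \<and>
            mu X A B C a1 b2 c1 = 2 \<and> mu X A B C a1 b2 c2 = 2)
        \<or> \<not> (mu_BC X B C b1 c1 = 1 \<and> mu_BC X B C b1 c2 = 1 \<and>
             mu_BC X B C b2 c1 = 0 \<and> mu_BC X B C b2 c2 = 1)) \<longleftrightarrow> \<not> pat1 a1 b1 b2 c1 c2"
  using assms by (simp add: mu_eq muBC_eq pat1_def)

end

theorem proposition3p7:
  fixes A B C :: "nat \<Rightarrow> 'k :: {alg_closed_field, field_char_0} option"
    and d1 d2 d3 :: nat
    and U3 U2 U1 :: "(nat \<times> nat) set"
    and X :: "'k pt3 set set"
  assumes X_def: "X = lines_of A B C U3 U2 U1"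
    and injA: "inj_on A {1..d1}" and injB: "inj_on B {1..d2}" and injC: "inj_on C {1..d3}"
    and U3_sub: "U3 \<subseteq> {1..d1} \<times> {1..d2}"
    and U2_sub: "U2 \<subseteq> {1..d1} \<times> {1..d3}"
    and U1_sub: "U1 \<subseteq> {1..d2} \<times> {1..d3}"
    and A_used: "\<forall>i\<in>{1..d1}. (\<exists>j. (i, j) \<in> U3) \<or> (\<exists>k. (i, k) \<in> U2)"
    and B_used: "\<forall>j\<in>{1..d2}. (\<exists>i. (i, j) \<in> U3) \<or> (\<exists>k. (j, k) \<in> U1)"
    and C_used: "\<forall>k\<in>{1..d3}. (\<exists>i. (i, k) \<in> U2) \<or> (\<exists>j. (j, k) \<in> U1)"
    and F3: "resembles_ferrers U3 d1 d2"
    and F2: "resembles_ferrers U2 d1 d3"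
    and F1: "resembles_ferrers U1 d2 d3"
  shows "Hyp5_star X \<longleftrightarrow>
    (\<forall>a1\<in>{1..d1}. \<forall>a2\<in>{1..d1}. \<forall>b1\<in>{1..d2}. \<forall>b2\<in>{1..d2}. \<forall>c1\<in>{1..d3}. \<forall>c2\<in>{1..d3}.
       (\<not> (mu X A B C a1 b1 c1 = 2 \<and> mu X A B C a1 b2 c1 = 1 \<and>
            mu X A B C a2 b1 c1 = 2 \<and> mu X A B C a2 b2 c1 = 2)
        \<or> \<not> (mu_AB X A B a1 b1 = 1 \<and> mu_AB X A B a1 b2 = 1 \<and>
             mu_AB X A B a2 b1 = 0 \<and> mu_AB X A B a2 b2 = 1)) \<and>
       (\<not> (mu X A B C a1 b1 c1 = 2 \<and> mu X A B C a1 b1 c2 = 1 \<and>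
            mu X A B C a2 b1 c1 = 2 \<and> mu X A B C a2 b1 c2 = 2)
        \<or> \<not> (mu_AC X A C a1 c1 = 1 \<and> mu_AC X A C a1 c2 = 1 \<and>
             mu_AC X A C a2 c1 = 0 \<and> mu_AC X A C a2 c2 = 1)) \<and>
       (\<not> (mu X A B C a1 b1 c1 = 2 \<and> mu X A B C a1 b1 c2 = 1 \<and>
            mu X A B C a1 b2 c1 = 2 \<and> mu X A B C a1 b2 c2 = 2)
        \<or> \<not> (mu_BC X B C b1 c1 = 1 \<and> mu_BC X B C b1 c2 = 1 \<and>
             mu_BC X B C b2 c1 = 0 \<and> mu_BC X B C b2 c2 = 1)))"
proof -
  interpret L: LX A B C d1 d2 d3 U3 U2 U1 X
    by (rule LX.intro[OF X_def injA injB injC U3_sub U2_sub U1_sub])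
  have H: "Hyp5_star X \<longleftrightarrow> \<not> L.bad" using L.bad_notHyp5 L.notHyp5_bad by blast
  have R: "(\<forall>a1\<in>{1..d1}. \<forall>a2\<in>{1..d1}. \<forall>b1\<in>{1..d2}. \<forall>b2\<in>{1..d2}. \<forall>c1\<in>{1..d3}. \<forall>c2\<in>{1..d3}.
       (\<not> (mu X A B C a1 b1 c1 = 2 \<and> mu X A B C a1 b2 c1 = 1 \<and>
            mu X A B C a2 b1 c1 = 2 \<and> mu X A B C a2 b2 c1 = 2)
        \<or> \<not> (mu_AB X A B a1 b1 = 1 \<and> mu_AB X A B a1 b2 = 1 \<and>
             mu_AB X A B a2 b1 = 0 \<and> mu_AB X A B a2 b2 = 1)) \<and>
       (\<not> (mu X A B C a1 b1 c1 = 2 \<and> mu X A B C a1 b1 c2 = 1 \<and>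
            mu X A B C a2 b1 c1 = 2 \<and> mu X A B C a2 b1 c2 = 2)
        \<or> \<not> (mu_AC X A C a1 c1 = 1 \<and> mu_AC X A C a1 c2 = 1 \<and>
             mu_AC X A C a2 c1 = 0 \<and> mu_AC X A C a2 c2 = 1)) \<and>
       (\<not> (mu X A B C a1 b1 c1 = 2 \<and> mu X A B C a1 b1 c2 = 1 \<and>
            mu X A B C a1 b2 c1 = 2 \<and> mu X A B C a1 b2 c2 = 2)
        \<or> \<not> (mu_BC X B C b1 c1 = 1 \<and> mu_BC X B C b1 c2 = 1 \<and>
             mu_BC X B C b2 c1 = 0 \<and> mu_BC X B C b2 c2 = 1))) \<longleftrightarrow> \<not> L.bad"
  proof
    assume rhs: "(\<forall>a1\<in>{1..d1}. \<forall>a2\<in>{1..d1}. \<forall>b1\<in>{1..d2}. \<forall>b2\<in>{1..d2}. \<forall>c1\<in>{1..d3}. \<forall>c2\<in>{1..d3}.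
       (\<not> (mu X A B C a1 b1 c1 = 2 \<and> mu X A B C a1 b2 c1 = 1 \<and>
            mu X A B C a2 b1 c1 = 2 \<and> mu X A B C a2 b2 c1 = 2)
        \<or> \<not> (mu_AB X A B a1 b1 = 1 \<and> mu_AB X A B a1 b2 = 1 \<and>
             mu_AB X A B a2 b1 = 0 \<and> mu_AB X A B a2 b2 = 1)) \<and>
       (\<not> (mu X A B C a1 b1 c1 = 2 \<and> mu X A B C a1 b1 c2 = 1 \<and>
            mu X A B C a2 b1 c1 = 2 \<and> mu X A B C a2 b1 c2 = 2)
        \<or> \<not> (mu_AC X A C a1 c1 = 1 \<and> mu_AC X A C a1 c2 = 1 \<and>
             mu_AC X A C a2 c1 = 0 \<and> mu_AC X A C a2 c2 = 1)) \<and>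
       (\<not> (mu X A B C a1 b1 c1 = 2 \<and> mu X A B C a1 b1 c2 = 1 \<and>
            mu X A B C a1 b2 c1 = 2 \<and> mu X A B C a1 b2 c2 = 2)
        \<or> \<not> (mu_BC X B C b1 c1 = 1 \<and> mu_BC X B C b1 c2 = 1 \<and>
             mu_BC X B C b2 c1 = 0 \<and> mu_BC X B C b2 c2 = 1)))"
    show "\<not> L.bad" unfolding L.bad_def
    proof (intro notI, elim disjE bexE)
      fix a1 a2 b1 b2 c assume r: "a1 \<in> {1..d1}" "a2 \<in> {1..d1}" "b1 \<in> {1..d2}" "b2 \<in> {1..d2}" "c \<in> {1..d3}"
        and p: "L.pat3 a1 a2 b1 b2 c"
      have "\<not> L.pat3 a1 a2 b1 b2 c"
        using conjunct1[OF rhs[rule_format, OF r(1) r(2) r(3) r(4) r(5) r(5)]] L.cond1_iff[OF r] by blast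
      then show False using p by blast
    next
      fix a1 a2 b c1 c2 assume r: "a1 \<in> {1..d1}" "a2 \<in> {1..d1}" "b \<in> {1..d2}" "c1 \<in> {1..d3}" "c2 \<in> {1..d3}"
        and p: "L.pat2 a1 a2 b c1 c2"
      have "\<not> L.pat2 a1 a2 b c1 c2"
        using conjunct1[OF conjunct2[OF rhs[rule_format, OF r(1) r(2) r(3) r(3) r(4) r(5)]]] L.cond2_iff[OF r] by blast
      then show False using p by blast
    next
      fix a b1 b2 c1 c2 assume r: "a \<in> {1..d1}" "b1 \<in> {1..d2}" "b2 \<in> {1..d2}" "c1 \<in> {1..d3}" "c2 \<in> {1..d3}"
        and p: "L.pat1 a b1 b2 c1 c2"
      have "\<not> L.pat1 a b1 b2 c1 c2"
        using conjunct2[OF conjunct2[OF rhs[rule_format, OF r(1) r(1) r(2) r(3) r(4) r(5)]]] L.cond3_iff[OF r] by blast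
      then show False using p by blast
    qed
  next
    assume nb: "\<not> L.bad"
    show "(\<forall>a1\<in>{1..d1}. \<forall>a2\<in>{1..d1}. \<forall>b1\<in>{1..d2}. \<forall>b2\<in>{1..d2}. \<forall>c1\<in>{1..d3}. \<forall>c2\<in>{1..d3}.
       (\<not> (mu X A B C a1 b1 c1 = 2 \<and> mu X A B C a1 b2 c1 = 1 \<and>
            mu X A B C a2 b1 c1 = 2 \<and> mu X A B C a2 b2 c1 = 2)
        \<or> \<not> (mu_AB X A B a1 b1 = 1 \<and> mu_AB X A B a1 b2 = 1 \<and>
             mu_AB X A B a2 b1 = 0 \<and> mu_AB X A B a2 b2 = 1)) \<and>
       (\<not> (mu X A B C a1 b1 c1 = 2 \<and> mu X A B C a1 b1 c2 = 1 \<and>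
            mu X A B C a2 b1 c1 = 2 \<and> mu X A B C a2 b1 c2 = 2)
        \<or> \<not> (mu_AC X A C a1 c1 = 1 \<and> mu_AC X A C a1 c2 = 1 \<and>
             mu_AC X A C a2 c1 = 0 \<and> mu_AC X A C a2 c2 = 1)) \<and>
       (\<not> (mu X A B C a1 b1 c1 = 2 \<and> mu X A B C a1 b1 c2 = 1 \<and>
            mu X A B C a1 b2 c1 = 2 \<and> mu X A B C a1 b2 c2 = 2)
        \<or> \<not> (mu_BC X B C b1 c1 = 1 \<and> mu_BC X B C b1 c2 = 1 \<and>
             mu_BC X B C b2 c1 = 0 \<and> mu_BC X B C b2 c2 = 1)))"
    proof (intro ballI)
      fix a1 a2 b1 b2 c1 c2 assume r: "a1 \<in> {1..d1}" "a2 \<in> {1..d1}" "b1 \<in> {1..d2}" "b2 \<in> {1..d2}" "c1 \<in> {1..d3}" "c2 \<in> {1..d3}"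
      have n3: "\<not> L.pat3 a1 a2 b1 b2 c1" using nb r unfolding L.bad_def by blast
      have n2: "\<not> L.pat2 a1 a2 b1 c1 c2" using nb r unfolding L.bad_def by blast
      have n1: "\<not> L.pat1 a1 b1 b2 c1 c2" using nb r unfolding L.bad_def by blast
      show "(\<not> (mu X A B C a1 b1 c1 = 2 \<and> mu X A B C a1 b2 c1 = 1 \<and>
            mu X A B C a2 b1 c1 = 2 \<and> mu X A B C a2 b2 c1 = 2)
        \<or> \<not> (mu_AB X A B a1 b1 = 1 \<and> mu_AB X A B a1 b2 = 1 \<and>
             mu_AB X A B a2 b1 = 0 \<and> mu_AB X A B a2 b2 = 1)) \<and>
       (\<not> (mu X A B C a1 b1 c1 = 2 \<and> mu X A B C a1 b1 c2 = 1 \<and>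
            mu X A B C a2 b1 c1 = 2 \<and> mu X A B C a2 b1 c2 = 2)
        \<or> \<not> (mu_AC X A C a1 c1 = 1 \<and> mu_AC X A C a1 c2 = 1 \<and>
             mu_AC X A C a2 c1 = 0 \<and> mu_AC X A C a2 c2 = 1)) \<and>
       (\<not> (mu X A B C a1 b1 c1 = 2 \<and> mu X A B C a1 b1 c2 = 1 \<and>
            mu X A B C a1 b2 c1 = 2 \<and> mu X A B C a1 b2 c2 = 2)
        \<or> \<not> (mu_BC X B C b1 c1 = 1 \<and> mu_BC X B C b1 c2 = 1 \<and>
             mu_BC X B C b2 c1 = 0 \<and> mu_BC X B C b2 c2 = 1))"
        using L.cond1_iff[OF r(1) r(2) r(3) r(4) r(5)] L.cond2_iff[OF r(1) r(2) r(3) r(5) r(6)]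
          L.cond3_iff[OF r(1) r(3) r(4) r(5) r(6)] n1 n2 n3 by blast
    qed
  qed
  show ?thesis using H R by blast
qed

end
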